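(* Suppose that at the unconstrained Nash equilibrium only SP 2's constraint is violated, i.e., $B_{1,S}^{\text{NE}}\ge B_{1,S}^0$ and $B_{2,S}^{\text{NE}}<B_{2,S}^0$. Then the Nash equilibrium with the regulatory constraints is of one of the following two types: Type I. Both SPs allocate exactly the required amount to small-cells, i.e., $B_{1,S}=B_{1,S}^0$, $B_{2,S}=B_{2,S}^0$. Type II. Only SP 2 allocates exactly the required minimum amount of bandwidth to small-cells, i.e., $B_{1,S}>B_{1,S}^0$, $B_{2,S}=B_{2,S}^0$.
   Context: Two competing service providers (SPs), $i=1,2$, each have total licensed bandwidth $B_i$, split into macro-cell bandwidth $B_{i,M}$ and small-cell bandwidth $B_{i,S}$ with $B_{i,M}+B_{i,S}\le B_i$, $B_{i,M}\ge 0$, and regulatory constraint $B_{i,S}\ge B_{i,S}^0$. Macro-cells of SP $i$ provide rate $B_{i,M}R_0$, small-cells provide rate $\lambda_S B_{i,S}R_0$ with $\lambda_S>1$. Mobile users (density $N_m$) can only use macro-cells (with priority); fixed users (density $N_f$) can use macro- or small-cells of either SP. All users have utility $u(r)=r^{1-\alpha}/(1-\alpha)$, $\alpha\in(0,1)$, with demand $D(p)=(1/p)^{1/\alpha}$ at price $p$ per unit rate; users choose the lowest-priced service and fill its capacity. Each SP maximizes its revenue $p_{i,M}K_{i,M}D(p_{i,M})+p_{i,S}K_{i,S}D(p_{i,S})$ in a two-stage game: bandwidth splits first, then prices; the price equilibrium for any fixed bandwidth allocation is the market-clearing price. Without the regulatory constraints there is a unique Nash equilibrium with $B_{i,S}^{\text{NE}}=\frac{N_f\lambda_S^{1/\alpha-1}B_i}{N_f\lambda_S^{1/\alpha-1}+N_m}$,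 $B_{i,M}^{\text{NE}}=\frac{N_mB_i}{N_f\lambda_S^{1/\alpha-1}+N_m}$; with the constraints a Nash equilibrium exists and is unique. *)

theory Defs
  imports Complex_Main
begin

text \<open>Capacities: CM = R0*BM, CS = lam*R0*BS; demand D(p) = p powr (-1/alpha).
If CS/Nf >= CM/Nm the fixed users are served by the (cheaper) small cells and
the mobile users by the macro cells (separate markets); otherwise fixed users
spill over into the macro cells and a common price clears the pooled market.\<close>
definition clearing_prices ::
  "real \<Rightarrow> real \<Rightarrow> real \<Rightarrow> real \<Rightarrow> real \<Rightarrow> real \<Rightarrow> real \<Rightarrow> real \<times> real" where
  "clearing_prices Nm Nf lam alpha R0 BM BS =
     (let CM = R0 * BM; CS = lam * R0 * BS in
      if CS * Nm \<ge> CM * Nf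
      then ((Nm / CM) powr alpha, (Nf / CS) powr alpha)
      else (let p = ((Nm + Nf) / (CM + CS)) powr alpha in (p, p)))"

text \<open>Revenue of an SP with allocation (bm, bs) when the competitor uses (cm, cs):
price times capacity sold (capacity is filled at the market-clearing price).\<close>
definition revenue ::
  "real \<Rightarrow> real \<Rightarrow> real \<Rightarrow> real \<Rightarrow> real \<Rightarrow> real \<times> real \<Rightarrow> real \<times> real \<Rightarrow> real" where
  "revenue Nm Nf lam alpha R0 own other =
     (let (bm, bs) = own; (cm, cs) = other;
          (pM, pS) = clearing_prices Nm Nf lam alpha R0 (bm + cm) (bs + cs)
      in pM * (R0 * bm) + pS * (lam * R0 * bs))"

definition feasible :: "real \<Rightarrow> real \<Rightarrow> real \<times> real \<Rightarrow> bool" where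
  "feasible B B0 a = (0 \<le> fst a \<and> B0 \<le> snd a \<and> fst a + snd a \<le> B)"

definition constrained_NE ::
  "real \<Rightarrow> real \<Rightarrow> real \<Rightarrow> real \<Rightarrow> real \<Rightarrow> real \<Rightarrow> real \<Rightarrow> real \<Rightarrow> real \<Rightarrow>
   real \<times> real \<Rightarrow> real \<times> real \<Rightarrow> bool" where
  "constrained_NE Nm Nf lam alpha R0 B1 B2 B01 B02 a1 a2 =
     (feasible B1 B01 a1 \<and> feasible B2 B02 a2 \<and>
      (\<forall>b1. feasible B1 B01 b1 \<longrightarrow>
         revenue Nm Nf lam alpha R0 b1 a2 \<le> revenue Nm Nf lam alpha R0 a1 a2) \<and>
      (\<forall>b2. feasible B2 B02 b2 \<longrightarrow>
         revenue Nm Nf lam alpha R0 b2 a1 \<le> revenue Nm Nf lam alpha R0 a2 a1))"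

definition BS_NE :: "real \<Rightarrow> real \<Rightarrow> real \<Rightarrow> real \<Rightarrow> real \<Rightarrow> real" where
  "BS_NE Nm Nf lam alpha B =
     Nf * lam powr (1 / alpha - 1) * B / (Nf * lam powr (1 / alpha - 1) + Nm)"

end

theory Submission
  imports Defs
begin


lemma price_deriv:
  fixes c a d al :: real
  assumes "0 < c" "0 < a"
  shows "((\<lambda>e. (c/(a + d*e)) powr al) has_real_derivative (-(al*d/a) * (c/a) powr al)) (at 0)"
proof -
  have g: "((\<lambda>e. c/(a + d*e)) has_real_derivative (- c*d/a^2)) (at 0)"
    using assms by (auto intro!: derivative_eq_intros simp: power2_eq_square)
  have "((\<lambda>e. (c/(a + d*e)) powr ((\<lambda>_. al) e)) has_real_derivative
     ((c/(a+d*0)) powr al * (0 * ln (c/(a+d*0)) + (- c*d/a^2) * al / (c/(a+d*0))))) (at 0)"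
    by (rule DERIV_powr[OF g]) (use assms in auto)
  moreover have "(c/(a+d*0)) powr al * (0 * ln (c/(a+d*0)) + (- c*d/a^2) * al / (c/(a+d*0)))
     = (-(al*d/a) * (c/a) powr al)"
    using assms by (simp add: field_simps power2_eq_square)
  ultimately show ?thesis by simp
qed



lemma sep_deriv:
  fixes Nm Nf lam al R0 M S m s dm ds :: real
  assumes "0 < Nm" "0 < Nf" "0 < lam" "0 < R0" "0 < M" "0 < S"
  shows "((\<lambda>e. (Nm/(R0*M + R0*dm*e)) powr al * (R0*m + R0*dm*e)
             + (Nf/(lam*R0*S + lam*R0*ds*e)) powr al * (lam*R0*s + lam*R0*ds*e))
     has_real_derivative
      (dm * (R0*(Nm/(R0*M)) powr al) * (1 - al*m/M) + ds * (lam*R0*(Nf/(lam*R0*S)) powr al) * (1 - al*s/S))) (at 0)"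
proof -
  have d1: "((\<lambda>e. (Nm/(R0*M + (R0*dm)*e)) powr al) has_real_derivative (-(al*(R0*dm)/(R0*M)) * (Nm/(R0*M)) powr al)) (at 0)"
    by (rule price_deriv) (use assms in auto)
  have d2: "((\<lambda>e. (Nf/(lam*R0*S + (lam*R0*ds)*e)) powr al) has_real_derivative (-(al*(lam*R0*ds)/(lam*R0*S)) * (Nf/(lam*R0*S)) powr al)) (at 0)"
    by (rule price_deriv) (use assms in auto)
  have l1: "((\<lambda>e. R0*m + R0*dm*e) has_real_derivative (R0*dm)) (at 0)"
    by (auto intro!: derivative_eq_intros)
  have l2: "((\<lambda>e. lam*R0*s + lam*R0*ds*e) has_real_derivative (lam*R0*ds)) (at 0)"
    by (auto intro!: derivative_eq_intros)
  have "((\<lambda>e. (Nm/(R0*M + (R0*dm)*e)) powr al * (R0*m + R0*dm*e)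
             + (Nf/(lam*R0*S + (lam*R0*ds)*e)) powr al * (lam*R0*s + lam*R0*ds*e))
     has_real_derivative
      ((-(al*(R0*dm)/(R0*M)) * (Nm/(R0*M)) powr al) * (R0*m + R0*dm*0) + (R0*dm) * (Nm/(R0*M + (R0*dm)*0)) powr al
      + ((-(al*(lam*R0*ds)/(lam*R0*S)) * (Nf/(lam*R0*S)) powr al) * (lam*R0*s + lam*R0*ds*0) + (lam*R0*ds) * (Nf/(lam*R0*S + (lam*R0*ds)*0)) powr al))) (at 0)"
    by (rule DERIV_add[OF DERIV_mult[OF d1 l1] DERIV_mult[OF d2 l2]])
  moreover have "\<And>pm ps. ((-(al*(R0*dm)/(R0*M)) * pm) * (R0*m + R0*dm*0) + (R0*dm) * pm
      + ((-(al*(lam*R0*ds)/(lam*R0*S)) * ps) * (lam*R0*s + lam*R0*ds*0) + (lam*R0*ds) * ps))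
    = (dm * (R0*pm) * (1 - al*m/M) + ds * (lam*R0*ps) * (1 - al*s/S))"
    using assms by (simp add: field_simps)
  ultimately show ?thesis by (simp add: mult.assoc)
qed

lemma improve:
  fixes g R :: "real \<Rightarrow> real"
  assumes "(g has_real_derivative D) (at 0)" "0 < D"
    "eventually (\<lambda>e. R e = g e) (at_right 0)" "R 0 = g 0"
    "eventually feas (at_right 0)" "\<And>e. feas e \<Longrightarrow> R e \<le> R 0"
  shows False
proof -
  obtain d where d: "d > 0" "\<And>h. h > 0 \<Longrightarrow> h < d \<Longrightarrow> g 0 < g (0 + h)"
    using DERIV_pos_inc_right[OF assms(1,2)] by blast
  have "eventually (\<lambda>e. e < d) (at_right (0::real))"
    using d(1) eventually_at_right_field by blast
  then have "eventually (\<lambda>e. e < d \<and> R e = g e \<and> feas e) (at_right 0)"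
    using assms(3,5) eventually_conj by blast
  then obtain b where b: "b > 0" "\<And>y. y > 0 \<Longrightarrow> y < b \<Longrightarrow> y < d \<and> R y = g y \<and> feas y"
    unfolding eventually_at_right_field by blast
  have "b/2 > 0" "b/2 < b" using b by auto
  then have h: "b/2 < d" "R (b/2) = g (b/2)" "feas (b/2)" using b by blast+
  have "g 0 < g (b/2)" using d(2)[of "b/2"] h \<open>b/2>0\<close> by simp
  then show False using h assms(4) assms(6)[of "b/2"] by simp
qed



lemma rev_sep:
  assumes "0 < R0" "(m+cm)*Nf \<le> lam*(s+cs)*Nm"
  shows "revenue Nm Nf lam al R0 (m,s) (cm,cs) =
    (Nm/(R0*(m+cm))) powr al * (R0*m) + (Nf/(lam*R0*(s+cs))) powr al * (lam*R0*s)"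
proof -
  have "lam*R0*(s+cs)*Nm \<ge> R0*(m+cm)*Nf" using assms
    by (metis mult.assoc mult.commute mult_le_cancel_left_pos)
  then show ?thesis unfolding revenue_def clearing_prices_def by (simp add: Let_def)
qed

lemma rev_pool:
  assumes "0 < R0" "lam*(s+cs)*Nm < (m+cm)*Nf"
  shows "revenue Nm Nf lam al R0 (m,s) (cm,cs) =
    ((Nm+Nf)/(R0*(m+cm) + lam*R0*(s+cs))) powr al * (R0*m + lam*R0*s)"
proof -
  have "\<not> lam*R0*(s+cs)*Nm \<ge> R0*(m+cm)*Nf" using assms
    by (metis mult.assoc mult.commute mult_le_cancel_left_pos not_le)
  then show ?thesis unfolding revenue_def clearing_prices_def by (simp add: Let_def algebra_simps)
qed



lemma dir_sep:
  fixes Nm Nf lam al R0 B B0 m s cm cs dm ds :: real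
  assumes pos: "0 < Nm" "0 < Nf" "0 < lam" "0 < R0"
  and NE: "\<forall>b. feasible B B0 b \<longrightarrow> revenue Nm Nf lam al R0 b (cm,cs) \<le> revenue Nm Nf lam al R0 (m,s) (cm,cs)"
  and MS: "0 < m + cm" "0 < s + cs"
  and sep0: "(m+cm)*Nf \<le> lam*(s+cs)*Nm"
  and evsep: "eventually (\<lambda>e. (m+dm*e+cm)*Nf \<le> lam*(s+ds*e+cs)*Nm) (at_right 0)"
  and evfeas: "eventually (\<lambda>e. feasible B B0 (m+dm*e, s+ds*e)) (at_right 0)"
  shows "dm * (R0*(Nm/(R0*(m+cm))) powr al) * (1 - al*m/(m+cm)) + ds * (lam*R0*(Nf/(lam*R0*(s+cs))) powr al) * (1 - al*s/(s+cs)) \<le> 0"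
proof (rule ccontr)
  let ?g = "\<lambda>e. (Nm/(R0*(m+cm) + R0*dm*e)) powr al * (R0*m + R0*dm*e)
             + (Nf/(lam*R0*(s+cs) + lam*R0*ds*e)) powr al * (lam*R0*s + lam*R0*ds*e)"
  let ?R = "\<lambda>e. revenue Nm Nf lam al R0 (m+dm*e, s+ds*e) (cm,cs)"
  assume "\<not> ?thesis"
  then have D: "0 < dm * (R0*(Nm/(R0*(m+cm))) powr al) * (1 - al*m/(m+cm)) + ds * (lam*R0*(Nf/(lam*R0*(s+cs))) powr al) * (1 - al*s/(s+cs))" by simp
  have der: "(?g has_real_derivative (dm * (R0*(Nm/(R0*(m+cm))) powr al) * (1 - al*m/(m+cm)) + ds * (lam*R0*(Nf/(lam*R0*(s+cs))) powr al) * (1 - al*s/(s+cs)))) (at 0)"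
    by (rule sep_deriv) (use pos MS in auto)
  have eq: "?R e = ?g e" if "(m+dm*e+cm)*Nf \<le> lam*(s+ds*e+cs)*Nm" for e
  proof -
    have "?R e = (Nm/(R0*(m+dm*e+cm))) powr al * (R0*(m+dm*e)) + (Nf/(lam*R0*(s+ds*e+cs))) powr al * (lam*R0*(s+ds*e))"
      by (rule rev_sep) (use pos that in auto)
    also have "\<dots> = ?g e" by (simp add: algebra_simps)
    finally show ?thesis .
  qed
  have ev: "eventually (\<lambda>e. ?R e = ?g e) (at_right 0)"
    using evsep by (rule eventually_mono) (rule eq)
  have R0g: "?R 0 = ?g 0" using eq[of 0] sep0 by simp
  show False
  proof (rule improve[OF der D ev R0g evfeas])
    fix e assume "feasible B B0 (m+dm*e, s+ds*e)"
    then show "?R e \<le> ?R 0" using NE by simp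
  qed
qed



lemma ev_lin: "0 < (a::real) \<Longrightarrow> eventually (\<lambda>e. 0 < a + b*e) (at_right 0)"
proof -
  assume a: "0 < a"
  have "((\<lambda>e. a + b*e) \<longlongrightarrow> a + b*0) (at_right (0::real))"
    by (intro tendsto_intros)
  then show ?thesis using order_tendstoD(1)[of _ "a" _ 0] a by simp
qed

lemma ev_pos: "eventually (\<lambda>e::real. 0 < e) (at_right 0)"
  by (rule eventually_at_right_less)

lemma PQ_iff:
  fixes Nm Nf lam al R0 M S :: real
  assumes "0 < Nm" "0 < Nf" "1 < lam" "0 < al" "0 < R0" "0 < M" "0 < S"
  shows "(R0*(Nm/(R0*M)) powr al > lam*R0*(Nf/(lam*R0*S)) powr al) \<longleftrightarrow> S*Nm > lam powr (1/al - 1)*Nf*M"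
proof -
  let ?L = "lam powr (1/al - 1)"
  have Lp: "?L > 0" using assms by simp
  have "(1/al - 1)*al = 1 - al" using assms by (simp add: field_simps)
  then have "?L powr al = lam powr (1 - al)" by (simp add: powr_powr)
  also have "\<dots> = lam * lam powr (-al)" using powr_add[of lam 1 "-al"] assms by simp
  finally have Lal: "?L powr al = lam / lam powr al" using assms by (simp add: powr_minus divide_inverse)
  have "(?L*Nf/(R0*S)) powr al = ?L powr al * (Nf/(R0*S)) powr al"
    using assms by (simp add: powr_mult[symmetric] mult.assoc)
  also have "\<dots> = lam * ((Nf/(R0*S)) powr al / lam powr al)" using Lal by simp
  also have "\<dots> = lam * (Nf/(lam*R0*S)) powr al"
    using assms by (simp add: powr_divide[symmetric] field_simps)
  finally have Qeq: "lam*R0*(Nf/(lam*R0*S)) powr al = R0 * (?L*Nf/(R0*S)) powr al" by simp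
  have "(R0*(Nm/(R0*M)) powr al > R0 * (?L*Nf/(R0*S)) powr al) \<longleftrightarrow> (Nm/(R0*M)) powr al > (?L*Nf/(R0*S)) powr al"
    using assms by simp
  also have "\<dots> \<longleftrightarrow> Nm/(R0*M) > ?L*Nf/(R0*S)"
  proof
    assume "(Nm/(R0*M)) powr al > (?L*Nf/(R0*S)) powr al"
    then show "Nm/(R0*M) > ?L*Nf/(R0*S)"
      using powr_less_cancel2[of al "?L*Nf/(R0*S)" "Nm/(R0*M)"] assms Lp by simp
  next
    assume "Nm/(R0*M) > ?L*Nf/(R0*S)"
    then show "(Nm/(R0*M)) powr al > (?L*Nf/(R0*S)) powr al"
      using powr_less_mono2[of al "?L*Nf/(R0*S)" "Nm/(R0*M)"] assms Lp by simp
  qed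
  also have "\<dots> \<longleftrightarrow> S*Nm > ?L*Nf*M"
    using assms by (simp add: field_simps)
  finally have fin: "(R0*(Nm/(R0*M)) powr al > R0 * (?L*Nf/(R0*S)) powr al) \<longleftrightarrow> S*Nm > ?L*Nf*M" .
  show ?thesis unfolding Qeq by (rule fin)
qed

lemma PQ_iff2:
  fixes Nm Nf lam al R0 M S :: real
  assumes "0 < Nm" "0 < Nf" "1 < lam" "0 < al" "0 < R0" "0 < M" "0 < S"
  shows "(R0*(Nm/(R0*M)) powr al < lam*R0*(Nf/(lam*R0*S)) powr al) \<longleftrightarrow> S*Nm < lam powr (1/al - 1)*Nf*M"
proof -
  let ?L = "lam powr (1/al - 1)"
  have Lp: "?L > 0" using assms by simp
  have "(1/al - 1)*al = 1 - al" using assms by (simp add: field_simps)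
  then have "?L powr al = lam powr (1 - al)" by (simp add: powr_powr)
  also have "\<dots> = lam * lam powr (-al)" using powr_add[of lam 1 "-al"] assms by simp
  finally have Lal: "?L powr al = lam / lam powr al" using assms by (simp add: powr_minus divide_inverse)
  have "(?L*Nf/(R0*S)) powr al = ?L powr al * (Nf/(R0*S)) powr al"
    using assms by (simp add: powr_mult[symmetric] mult.assoc)
  also have "\<dots> = lam * ((Nf/(R0*S)) powr al / lam powr al)" using Lal by simp
  also have "\<dots> = lam * (Nf/(lam*R0*S)) powr al"
    using assms by (simp add: powr_divide[symmetric] field_simps)
  finally have Qeq: "lam*R0*(Nf/(lam*R0*S)) powr al = R0 * (?L*Nf/(R0*S)) powr al" by simp
  have "(R0*(Nm/(R0*M)) powr al < R0 * (?L*Nf/(R0*S)) powr al) \<longleftrightarrow> (Nm/(R0*M)) powr al < (?L*Nf/(R0*S)) powr al"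
    using assms by simp
  also have "\<dots> \<longleftrightarrow> Nm/(R0*M) < ?L*Nf/(R0*S)"
  proof
    assume "(Nm/(R0*M)) powr al < (?L*Nf/(R0*S)) powr al"
    then show "Nm/(R0*M) < ?L*Nf/(R0*S)"
      using powr_less_cancel2[of al "Nm/(R0*M)" "?L*Nf/(R0*S)"] assms Lp by simp
  next
    assume "Nm/(R0*M) < ?L*Nf/(R0*S)"
    then show "(Nm/(R0*M)) powr al < (?L*Nf/(R0*S)) powr al"
      using powr_less_mono2[of al "Nm/(R0*M)" "?L*Nf/(R0*S)"] assms Lp by simp
  qed
  also have "\<dots> \<longleftrightarrow> S*Nm < ?L*Nf*M"
    using assms by (simp add: field_simps)
  finally have fin: "(R0*(Nm/(R0*M)) powr al < R0 * (?L*Nf/(R0*S)) powr al) \<longleftrightarrow> S*Nm < ?L*Nf*M" .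
  show ?thesis unfolding Qeq by (rule fin)
qed

lemma L_gt1: assumes "1 < (lam::real)" "0 < al" "al < 1" shows "1 < lam powr (1/al - 1)"
proof -
  have "1 < 1/al" using assms by (simp add: field_simps)
  then show ?thesis using gr_one_powr[of lam "1/al - 1"] assms by simp
qed



lemma pool_case:
  fixes Nm Nf lam al R0 B B0 m s cm cs :: real
  assumes pos: "0 < Nm" "0 < Nf" "1 < lam" "0 < al" "al < 1" "0 < R0"
  and NE: "\<forall>b. feasible B B0 b \<longrightarrow> revenue Nm Nf lam al R0 b (cm,cs) \<le> revenue Nm Nf lam al R0 (m,s) (cm,cs)"
  and fe: "feasible B B0 (m,s)" and nn: "0 \<le> cm" "0 \<le> cs" "0 \<le> B0"
  and m: "0 < m"
  and pool: "lam*(s+cs)*Nm < (m+cm)*Nf"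
  shows False
proof -
  have s0: "0 \<le> s" using fe nn unfolding feasible_def by auto
  define T where "T = R0*(m+cm) + lam*R0*(s+cs)"
  define X where "X = R0*m + lam*R0*s"
  define d where "d = R0*(lam - 1)"
  define p where "p = ((Nm+Nf)/T) powr al"
  have Tp: "0 < T" unfolding T_def using pos m nn s0 by (auto intro!: add_pos_nonneg)
  have XT: "X \<le> T" unfolding X_def T_def using pos nn by (simp add: algebra_simps)
  have dp: "0 < d" unfolding d_def using pos by simp
  have pp: "0 < p" unfolding p_def using pos Tp by simp
  let ?g = "\<lambda>e. ((Nm+Nf)/(T + d*e)) powr al * (X + d*e)"
  let ?R = "\<lambda>e. revenue Nm Nf lam al R0 (m+(-1)*e, s+1*e) (cm,cs)"
  have dd: "((\<lambda>e. ((Nm+Nf)/(T + d*e)) powr al) has_real_derivative (-(al*d/T) * ((Nm+Nf)/T) powr al)) (at 0)"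
    by (rule price_deriv) (use pos Tp in auto)
  have dX: "((\<lambda>e. X + d*e) has_real_derivative d) (at 0)"
    by (auto intro!: derivative_eq_intros)
  have der: "(?g has_real_derivative ((-(al*d/T) * p) * (X + d*0) + d * ((Nm+Nf)/(T + d*0)) powr al)) (at 0)"
    unfolding p_def by (rule DERIV_mult[OF dd dX])
  have "(-(al*d/T) * p) * (X + d*0) + d * ((Nm+Nf)/(T + d*0)) powr al = p*d*(1 - al*X/T)"
    unfolding p_def using Tp by (simp add: field_simps)
  moreover have "0 < p*d*(1 - al*X/T)"
  proof -
    have Xp: "0 < X" unfolding X_def using pos m s0 by (auto intro!: add_pos_nonneg)
    have "X*al < X*1" using Xp pos by (intro mult_strict_left_mono) auto
    then have "al*X/T < 1" using XT Tp by (simp add: field_simps)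
    then show ?thesis using pp dp by simp
  qed
  ultimately have D: "0 < (-(al*d/T) * p) * (X + d*0) + d * ((Nm+Nf)/(T + d*0)) powr al" by simp
  have eq: "?R e = ?g e" if "lam*(s+1*e+cs)*Nm < (m+(-1)*e+cm)*Nf" for e
  proof -
    have "?R e = ((Nm+Nf)/(R0*(m+(-1)*e+cm) + lam*R0*(s+1*e+cs))) powr al * (R0*(m+(-1)*e) + lam*R0*(s+1*e))"
      by (rule rev_pool) (use pos that in auto)
    also have "R0*(m+(-1)*e+cm) + lam*R0*(s+1*e+cs) = T + d*e" unfolding T_def d_def by (simp add: algebra_simps)
    also have "R0*(m+(-1)*e) + lam*R0*(s+1*e) = X + d*e" unfolding X_def d_def by (simp add: algebra_simps)
    finally show ?thesis .
  qed
  have evp: "eventually (\<lambda>e. lam*(s+1*e+cs)*Nm < (m+(-1)*e+cm)*Nf) (at_right 0)"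
  proof -
    have "eventually (\<lambda>e. 0 < ((m+cm)*Nf - lam*(s+cs)*Nm) + (-(Nf + lam*Nm))*e) (at_right 0)"
      by (rule ev_lin) (use pool in simp)
    then show ?thesis by (rule eventually_mono) (simp add: algebra_simps)
  qed
  have ev: "eventually (\<lambda>e. ?R e = ?g e) (at_right 0)"
    using evp by (rule eventually_mono) (rule eq)
  have R0g: "?R 0 = ?g 0" using eq[of 0] pool by simp
  have evf: "eventually (\<lambda>e. feasible B B0 (m+(-1)*e, s+1*e)) (at_right 0)"
  proof -
    have "eventually (\<lambda>e. 0 < m + (-1)*e) (at_right 0)" by (rule ev_lin) (use m in simp)
    then have "eventually (\<lambda>e. 0 < m + (-1)*e \<and> 0 < e) (at_right 0)" using ev_pos eventually_conj by blast
    then show ?thesis by (rule eventually_mono) (use fe in \<open>auto simp: feasible_def\<close>)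
  qed
  show False
  proof (rule improve[OF der D ev R0g evf])
    fix e assume "feasible B B0 (m+(-1)*e, s+1*e)"
    then show "?R e \<le> ?R 0" using NE by simp
  qed
qed



lemma M0_case:
  fixes Nm Nf lam al R0 B B0 s cs :: real
  assumes pos: "0 < Nm" "0 < Nf" "1 < lam" "0 < al" "al < 1" "0 < R0"
  and NE: "\<forall>b. feasible B B0 b \<longrightarrow> revenue Nm Nf lam al R0 b (0,cs) \<le> revenue Nm Nf lam al R0 (0,s) (0,cs)"
  and fe: "feasible B B0 (0,s)" and nn: "0 \<le> cs" "0 \<le> B0"
  and s: "B0 < s"
  shows False
proof -
  define S where "S = s + cs"
  have Sp: "0 < S" unfolding S_def using s nn by simp
  define ps where "ps = (Nf/(lam*R0*S)) powr al"
  have psp: "0 < ps" unfolding ps_def using pos Sp by simp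
  define K where "K = lam*ps"
  have Kp: "0 < K" unfolding K_def using psp pos by simp
  define Tt where "Tt = K powr (1/al)"
  have Ttp: "0 < Tt" unfolding Tt_def using Kp by simp
  have TtK: "Tt powr al = K" unfolding Tt_def using Kp pos by (simp add: powr_powr)
  have R0v: "revenue Nm Nf lam al R0 (0,s) (0,cs) = lam*R0*s*ps"
  proof -
    have "revenue Nm Nf lam al R0 (0,s) (0,cs) = (Nm/(R0*(0+0))) powr al * (R0*0) + (Nf/(lam*R0*(s+cs))) powr al * (lam*R0*s)"
      by (rule rev_sep) (use pos Sp S_def in auto)
    then show ?thesis unfolding ps_def S_def by simp
  qed
  have e1: "eventually (\<lambda>e::real. 0 < e) (at_right 0)" by (rule ev_pos)
  have e2: "eventually (\<lambda>e. 0 < (s - B0) + (-1)*e) (at_right 0)" by (rule ev_lin) (use s in simp)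
  have e3: "eventually (\<lambda>e. 0 < lam*S*Nm + (-(lam*Nm + Nf))*e) (at_right 0)" by (rule ev_lin) (use pos Sp in simp)
  have e4: "eventually (\<lambda>e. 0 < Nm/(R0*Tt) + (-1)*e) (at_right 0)" by (rule ev_lin) (use pos Ttp in simp)
  have "eventually (\<lambda>e. 0 < e \<and> 0 < (s - B0) + (-1)*e \<and> 0 < lam*S*Nm + (-(lam*Nm + Nf))*e \<and> 0 < Nm/(R0*Tt) + (-1)*e) (at_right 0)"
    using e1 e2 e3 e4 eventually_conj by blast
  then obtain b where b: "b > 0" "\<And>y. y > 0 \<Longrightarrow> y < b \<Longrightarrow> 0 < y \<and> 0 < (s - B0) + (-1)*y \<and> 0 < lam*S*Nm + (-(lam*Nm + Nf))*y \<and> 0 < Nm/(R0*Tt) + (-1)*y"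
    unfolding eventually_at_right_field by blast
  define e where "e = b/2"
  have ep: "0 < e" "e < s - B0" "0 < lam*S*Nm + (-(lam*Nm + Nf))*e" "e < Nm/(R0*Tt)"
    using b(2)[of e] b(1) unfolding e_def by auto
  have fe2: "feasible B B0 (e, s - e)" using fe ep unfolding feasible_def by auto
  have sepe: "(e+0)*Nf \<le> lam*((s-e)+cs)*Nm" using ep(3) unfolding S_def by (simp add: algebra_simps)
  have Re: "revenue Nm Nf lam al R0 (e, s-e) (0,cs) = (Nm/(R0*(e+0))) powr al * (R0*e) + (Nf/(lam*R0*((s-e)+cs))) powr al * (lam*R0*(s-e))"
    by (rule rev_sep) (use pos sepe in auto)
  have "Tt < Nm/(R0*e)" using ep(1,4) Ttp pos by (simp add: field_simps)
  then have "Tt powr al < (Nm/(R0*e)) powr al" using powr_less_mono2[of al Tt] pos Ttp by simp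
  then have pmK: "K < (Nm/(R0*e)) powr al" using TtK by simp
  have Se: "0 < S - e" using ep nn unfolding S_def by simp
  have "Nf/(lam*R0*S) \<le> Nf/(lam*R0*(S-e))"
    using pos Se ep(1) by (intro divide_left_mono mult_pos_pos) auto
  moreover have "lam*R0*(S-e) = lam*R0*((s-e)+cs)" unfolding S_def by (simp add: algebra_simps)
  moreover have "0 \<le> Nf/(lam*R0*S)" using pos Sp by simp
  ultimately have psle: "ps \<le> (Nf/(lam*R0*((s-e)+cs))) powr al"
    unfolding ps_def using pos by (intro powr_mono2) auto
  have "K*(R0*e) < (Nm/(R0*e)) powr al * (R0*e)" using pmK pos ep(1) by simp
  moreover have "ps*(lam*R0*(s-e)) \<le> (Nf/(lam*R0*((s-e)+cs))) powr al * (lam*R0*(s-e))"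
    using psle pos ep nn by (intro mult_right_mono) auto
  ultimately have "K*(R0*e) + ps*(lam*R0*(s-e)) < revenue Nm Nf lam al R0 (e, s-e) (0,cs)"
    using Re by simp
  moreover have "K*(R0*e) + ps*(lam*R0*(s-e)) = lam*R0*s*ps" unfolding K_def by (simp add: algebra_simps)
  ultimately show False using NE fe2 R0v by fastforce
qed



lemma alg_bound:
  fixes P Q al u v :: real
  assumes "0 < P" "P < Q" "0 < al" "al < 1" "0 \<le> u" "u \<le> 1" "0 \<le> v" "v \<le> 1"
  and a1: "0 < v \<Longrightarrow> Q*(1 - al*u) \<le> P*(1 - al*v)"
  and a2: "v < 1 \<Longrightarrow> Q*(1 - al*(1-u)) \<le> P*(1 - al*(1-v))"
  shows False
proof (cases "0 < v \<and> v < 1")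
  case True
  then have "Q*(1 - al*u) + Q*(1 - al*(1-u)) \<le> P*(1 - al*v) + P*(1 - al*(1-v))"
    using a1 a2 by (intro add_mono) auto
  then have "Q*(2-al) \<le> P*(2-al)" by (simp add: algebra_simps)
  then have "Q \<le> P" using assms by simp
  then show False using assms by simp
next
  case False
  then have "v = 0 \<or> v = 1" using assms by auto
  then show False
  proof
    assume v: "v = 0"
    then have "Q*(1 - al*(1-u)) \<le> P*(1 - al)" using a2 by simp
    moreover have "Q*(1-al) \<le> Q*(1 - al*(1-u))" using assms by (intro mult_left_mono) (auto simp: algebra_simps)
    moreover have "P*(1-al) < Q*(1-al)" using assms by simp
    ultimately show False by simp
  next
    assume v: "v = 1"
    then have "Q*(1 - al*u) \<le> P*(1 - al)" using a1 by simp
    moreover have "Q*(1-al) \<le> Q*(1 - al*u)" using assms by (intro mult_left_mono) (auto simp: algebra_simps mult_left_le)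
    moreover have "P*(1-al) < Q*(1-al)" using assms by simp
    ultimately show False by simp
  qed
qed



lemma alg_strict:
  fixes P Q al u v S M K Nm :: real and cc :: bool
  assumes pos: "0 < P" "0 < Q" "0 < al" "al < 1" "0 < S" "0 < M" "0 < K" "0 < Nm"
  and uv: "0 < u" "u \<le> 1" "0 \<le> v" "v \<le> 1"
  and h2: "u*S*Nm > K*(v*M)"
  and hPQ: "S*Nm > K*M \<Longrightarrow> P > Q"
  and a1: "v < 1 \<Longrightarrow> Q*(1 - al*(1-u)) \<le> P*(1 - al*(1-v))"
  and a2: "0 < v \<Longrightarrow> Q*(1 - al*u) \<le> P*(1 - al*v)"
  and b2: "Q*(1 - al*u) \<ge> P*(1 - al*v)"
  and b1: "\<not> cc \<Longrightarrow> Q*(1 - al*(1-u)) \<ge> P*(1 - al*(1-v))"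
  and c1: "cc \<Longrightarrow> (1-u)*S*Nm \<le> K*((1-v)*M)"
  and c1v: "v = 1 \<Longrightarrow> \<not> cc"
  shows False
proof -
  have al2: "0 < 2 - al" using pos by simp
  consider "v = 0" | "v = 1" | "0 < v \<and> v < 1" using uv by linarith
  then show False
  proof cases
    case 1
    then have A: "Q*(1 - al*(1-u)) \<le> P*(1 - al)" using a1 by simp
    have B: "P \<le> Q*(1 - al*u)" using b2 1 by simp
    have "P*(1-al) \<le> Q*(1 - al*u)*(1-al)" using B pos by (intro mult_right_mono) auto
    with A have "Q*(1 - al*(1-u)) \<le> Q*((1 - al*u)*(1-al))" by (simp add: mult.assoc)
    then have "1 - al*(1-u) \<le> (1 - al*u)*(1-al)" using pos by simp
    then have "al*u*(2-al) \<le> 0" by (simp add: algebra_simps)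
    moreover have "0 < al*u*(2-al)" using pos uv al2 by simp
    ultimately show False by simp
  next
    case 2
    have "Q*(1 - al*(1-u)) \<ge> P" using b1 c1v 2 by simp
    moreover have "Q*(1 - al*(1-u)) \<le> Q" using pos uv by (simp add: mult_left_le)
    moreover have "S*Nm > K*M"
    proof -
      have "S*Nm \<ge> u*S*Nm" using uv pos by (simp add: mult_left_le_one_le)
      then show ?thesis using h2 2 by simp
    qed
    then have "P > Q" by (rule hPQ)
    ultimately show False by simp
  next
    case 3
    have E: "Q*(1 - al*u) = P*(1 - al*v)" using a2 b2 3 by simp
    have A1: "Q*(1 - al*(1-u)) \<le> P*(1 - al*(1-v))" using a1 3 by simp
    from E A1 have "Q*(1 - al*u) + Q*(1 - al*(1-u)) \<le> P*(1 - al*v) + P*(1 - al*(1-v))" by simp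
    then have "Q*(2-al) \<le> P*(2-al)" by (simp add: algebra_simps)
    then have QP: "Q \<le> P" using al2 by simp
    have uv2: "u \<le> v"
    proof (rule ccontr)
      assume "\<not> u \<le> v"
      then have "al*v < al*u" using pos by simp
      then have X: "Q*(1 - al*u) < Q*(1 - al*v)" using pos by simp
      have "al*v \<le> 1*1" using pos uv by (intro mult_mono) auto
      then have "Q*(1 - al*v) \<le> P*(1 - al*v)" using QP by (intro mult_right_mono) auto
      with X show False using E by simp
    qed
    show False
    proof (cases cc)
      case True
      have c: "(1-u)*S*Nm \<le> K*((1-v)*M)" using c1 True by simp
      have "u*(1-v) \<le> v*(1-u)" using uv2 by (simp add: algebra_simps)
      then have "(u*(1-v))*(S*M*Nm) \<le> (v*(1-u))*(S*M*Nm)" using pos by (intro mult_right_mono) auto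
      moreover have "(u*S*Nm)*((1-v)*M) > (K*(v*M))*((1-v)*M)"
        using h2 3 pos by (intro mult_strict_right_mono) auto
      moreover have "(v*M)*((1-u)*S*Nm) \<le> (v*M)*(K*((1-v)*M))"
        using c 3 pos by (intro mult_left_mono) auto
      ultimately show False by (simp add: algebra_simps)
    next
      case False
      have E1: "Q*(1 - al*(1-u)) = P*(1 - al*(1-v))" using A1 b1 False by simp
      from E E1 have "Q*(1 - al*u) + Q*(1 - al*(1-u)) = P*(1 - al*v) + P*(1 - al*(1-v))" by simp
      then have "Q*(2-al) = P*(2-al)" by (simp add: algebra_simps)
      then have PQ: "P = Q" using al2 by simp
      with E have "u = v" using pos by simp
      have "\<not> S*Nm > K*M" using hPQ PQ by auto
      then have "S*Nm*v \<le> K*M*v" using 3 by (intro mult_right_mono) auto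
      then show False using h2 \<open>u = v\<close> by (simp add: algebra_simps)
    qed
  qed
qed



lemma sp_facts:
  fixes Nm Nf lam al R0 B B0 m s cm cs :: real
  assumes pos: "0 < Nm" "0 < Nf" "1 < lam" "0 < al" "al < 1" "0 < R0"
  and NE: "\<forall>b. feasible B B0 b \<longrightarrow> revenue Nm Nf lam al R0 b (cm,cs) \<le> revenue Nm Nf lam al R0 (m,s) (cm,cs)"
  and fe: "feasible B B0 (m,s)" and nn: "0 \<le> cm" "0 \<le> cs" "0 \<le> B0"
  and MS: "0 < m + cm" "0 < s + cs"
  and sep0: "(m+cm)*Nf \<le> lam*(s+cs)*Nm"
  shows "0 < m \<Longrightarrow> lam*R0*(Nf/(lam*R0*(s+cs))) powr al * (1 - al*s/(s+cs)) \<le> R0*(Nm/(R0*(m+cm))) powr al * (1 - al*m/(m+cm))"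
    and "(m+cm)*Nf < lam*(s+cs)*Nm \<Longrightarrow> B0 < s \<Longrightarrow> lam*R0*(Nf/(lam*R0*(s+cs))) powr al * (1 - al*s/(s+cs)) \<ge> R0*(Nm/(R0*(m+cm))) powr al * (1 - al*m/(m+cm))"
    and "(m+cm)*Nf < lam*(s+cs)*Nm \<Longrightarrow> m + s = B"
proof -
  let ?P = "R0*(Nm/(R0*(m+cm))) powr al" and ?Q = "lam*R0*(Nf/(lam*R0*(s+cs))) powr al"
  have lam0: "0 < lam" using pos by simp
  note ds = dir_sep[OF pos(1,2) lam0 pos(6) NE MS sep0]
  have m0: "0 \<le> m" and s0: "B0 \<le> s" and ms: "m + s \<le> B" using fe unfolding feasible_def by auto
  {
    assume m: "0 < m"
    have evs: "eventually (\<lambda>e. (m+(-1)*e+cm)*Nf \<le> lam*(s+1*e+cs)*Nm) (at_right 0)"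
    proof (rule eventually_mono[OF ev_pos])
      fix e :: real assume e: "0 < e"
      have "0 \<le> e*Nf" "0 \<le> e*(lam*Nm)" using e pos by auto
      moreover have "(m+(-1)*e+cm)*Nf = (m+cm)*Nf - e*Nf" "lam*(s+1*e+cs)*Nm = lam*(s+cs)*Nm + e*(lam*Nm)"
        by (simp_all add: algebra_simps)
      ultimately show "(m+(-1)*e+cm)*Nf \<le> lam*(s+1*e+cs)*Nm" using sep0 by linarith
    qed
    have evf: "eventually (\<lambda>e. feasible B B0 (m+(-1)*e, s+1*e)) (at_right 0)"
    proof -
      have "eventually (\<lambda>e. 0 < m + (-1)*e) (at_right 0)" by (rule ev_lin) (use m in simp)
      then have "eventually (\<lambda>e. 0 < m + (-1)*e \<and> 0 < e) (at_right 0)" using ev_pos eventually_conj by blast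
      then show ?thesis by (rule eventually_mono) (use fe in \<open>auto simp: feasible_def\<close>)
    qed
    have "(-1) * ?P * (1 - al*m/(m+cm)) + 1 * ?Q * (1 - al*s/(s+cs)) \<le> 0"
      by (rule ds[OF evs evf])
    then show "?Q * (1 - al*s/(s+cs)) \<le> ?P * (1 - al*m/(m+cm))" by simp
  }
  {
    assume strict: "(m+cm)*Nf < lam*(s+cs)*Nm"
    have evs0: "eventually (\<lambda>e. 0 < (lam*(s+cs)*Nm - (m+cm)*Nf) + (-Nf)*e) (at_right 0)"
      by (rule ev_lin) (use strict in simp)
    {
      assume s: "B0 < s"
      have evs: "eventually (\<lambda>e. (m+1*e+cm)*Nf \<le> lam*(s+(-1)*e+cs)*Nm) (at_right 0)"
      proof -
        have "eventually (\<lambda>e. 0 < (lam*(s+cs)*Nm - (m+cm)*Nf) + (-(Nf + lam*Nm))*e) (at_right 0)"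
          by (rule ev_lin) (use strict in simp)
        then show ?thesis by (rule eventually_mono) (simp add: algebra_simps)
      qed
      have evf: "eventually (\<lambda>e. feasible B B0 (m+1*e, s+(-1)*e)) (at_right 0)"
      proof -
        have "eventually (\<lambda>e. 0 < (s - B0) + (-1)*e) (at_right 0)" by (rule ev_lin) (use s in simp)
        then have "eventually (\<lambda>e. 0 < (s - B0) + (-1)*e \<and> 0 < e) (at_right 0)" using ev_pos eventually_conj by blast
        then show ?thesis by (rule eventually_mono) (use fe in \<open>auto simp: feasible_def\<close>)
      qed
      have "1 * ?P * (1 - al*m/(m+cm)) + (-1) * ?Q * (1 - al*s/(s+cs)) \<le> 0"
        by (rule ds[OF evs evf])
      then show "?Q * (1 - al*s/(s+cs)) \<ge> ?P * (1 - al*m/(m+cm))" by simp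
    }
    show "m + s = B"
    proof (rule ccontr)
      assume "m + s \<noteq> B"
      then have sl: "m + s < B" using ms by simp
      have evs: "eventually (\<lambda>e. (m+1*e+cm)*Nf \<le> lam*(s+0*e+cs)*Nm) (at_right 0)"
        using evs0 by (rule eventually_mono) (simp add: algebra_simps)
      have evf: "eventually (\<lambda>e. feasible B B0 (m+1*e, s+0*e)) (at_right 0)"
      proof -
        have "eventually (\<lambda>e. 0 < (B - m - s) + (-1)*e) (at_right 0)" by (rule ev_lin) (use sl in simp)
        then have "eventually (\<lambda>e. 0 < (B - m - s) + (-1)*e \<and> 0 < e) (at_right 0)" using ev_pos eventually_conj by blast
        then show ?thesis by (rule eventually_mono) (use fe in \<open>auto simp: feasible_def\<close>)
      qed
      have "1 * ?P * (1 - al*m/(m+cm)) + 0 * ?Q * (1 - al*s/(s+cs)) \<le> 0"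
        by (rule ds[OF evs evf])
      moreover have "0 < ?P" using pos MS by simp
      moreover have "al*m/(m+cm) < 1"
      proof -
        have "al*m < m + cm"
        proof (cases "m = 0")
          case True then show ?thesis using MS by simp
        next
          case False
          then have "al*m < 1*m" using pos m0 by (intro mult_strict_right_mono) auto
          then show ?thesis using nn by simp
        qed
        then show ?thesis using MS by (simp add: field_simps)
      qed
      ultimately have "?P * (1 - al*m/(m+cm)) \<le> 0" "0 < ?P" "0 < 1 - al*m/(m+cm)" by simp_all
      then show False by (metis mult_pos_pos not_le)
    qed
  }
qed



theorem proposition2:
  fixes Nm Nf lam alpha R0 B1 B2 B01 B02 b1M b1S b2M b2S :: real
  assumes "0 < Nm" and "0 < Nf" and "1 < lam" and "0 < alpha" and "alpha < 1"
    and "0 < R0" and "0 < B1" and "0 < B2"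
    and "0 \<le> B01" and "B01 \<le> B1" and "0 \<le> B02" and "B02 \<le> B2"
    and "BS_NE Nm Nf lam alpha B1 \<ge> B01"
    and "BS_NE Nm Nf lam alpha B2 < B02"
    and "constrained_NE Nm Nf lam alpha R0 B1 B2 B01 B02 (b1M, b1S) (b2M, b2S)"
  shows "(b1S = B01 \<and> b2S = B02) \<or> (b1S > B01 \<and> b2S = B02)"
proof -
  note pos = assms(1-6)
  have f1: "feasible B1 B01 (b1M, b1S)" and f2: "feasible B2 B02 (b2M, b2S)"
    and NE1: "\<forall>b. feasible B1 B01 b \<longrightarrow> revenue Nm Nf lam alpha R0 b (b2M, b2S) \<le> revenue Nm Nf lam alpha R0 (b1M, b1S) (b2M, b2S)"
    and NE2: "\<forall>b. feasible B2 B02 b \<longrightarrow> revenue Nm Nf lam alpha R0 b (b1M, b1S) \<le> revenue Nm Nf lam alpha R0 (b2M, b2S) (b1M, b1S)"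
    using assms(15) unfolding constrained_NE_def by auto
  have m1: "0 \<le> b1M" "B01 \<le> b1S" "b1M + b1S \<le> B1" using f1 unfolding feasible_def by auto
  have m2: "0 \<le> b2M" "B02 \<le> b2S" "b2M + b2S \<le> B2" using f2 unfolding feasible_def by auto
  define L where "L = lam powr (1/alpha - 1)"
  define K where "K = Nf*L"
  have Lg: "1 < L" unfolding L_def using L_gt1 pos by simp
  have Kp: "0 < K" unfolding K_def using Lg pos by simp
  have KN: "0 < K + Nm" using Kp pos by simp
  have BS1: "B01*(K+Nm) \<le> K*B1"
  proof -
    have "B01 \<le> K*B1/(K+Nm)" using assms(13) unfolding BS_NE_def K_def L_def by simp
    then show ?thesis using KN by (simp add: pos_le_divide_eq)
  qed
  have BS2: "K*B2 < B02*(K+Nm)"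
  proof -
    have "K*B2/(K+Nm) < B02" using assms(14) unfolding BS_NE_def K_def L_def by simp
    then show ?thesis using KN by (simp add: pos_divide_less_eq)
  qed
  have B01lt: "B01 < B1"
  proof -
    have "K*B1 < (K+Nm)*B1" using pos assms(7) by simp
    then have "B01*(K+Nm) < B1*(K+Nm)" using BS1 by (simp add: algebra_simps)
    then show ?thesis using KN by simp
  qed
  have s2eq: "b2S = B02"
  proof (rule ccontr)
    assume "b2S \<noteq> B02"
    then have s2g: "B02 < b2S" using m2 by simp
    have h2: "b2S*Nm > K*b2M"
    proof -
      have "b2S*(K+Nm) > B02*(K+Nm)" using s2g KN by simp
      moreover have "K*(b2M+b2S) \<le> K*B2" using m2 Kp by simp
      ultimately have "b2S*(K+Nm) > K*(b2M+b2S)" using BS2 by simp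
      then show ?thesis by (simp add: algebra_simps)
    qed
    define M where "M = b1M + b2M"
    define S where "S = b1S + b2S"
    have Sp: "0 < S" unfolding S_def using s2g m1 assms(9,11) by simp
    have M0: "0 \<le> M" unfolding M_def using m1 m2 by simp
    have nn1: "0 \<le> b1S" using m1 assms(9) by simp
    have nn2: "0 \<le> b2S" using m2 assms(11) by simp
    show False
    proof (cases "M = 0")
      case True
      then have z: "b1M = 0" "b2M = 0" using m1 m2 unfolding M_def by auto
      show False
        by (rule M0_case[of Nm Nf lam alpha R0 B2 B02 b1S b2S]) (use pos NE2 f2 z nn1 assms(11) s2g in auto)
    next
      case False
      then have Mp: "0 < M" using M0 by simp
      show False
      proof (cases "lam*S*Nm < M*Nf")
        case True
        show False
        proof (cases "0 < b1M")
          case True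
          show False
          proof (rule pool_case[OF pos NE1 f1 m2(1) nn2 assms(9) True])
            show "lam*(b1S+b2S)*Nm < (b1M+b2M)*Nf" using \<open>lam*S*Nm < M*Nf\<close> unfolding S_def M_def .
          qed
        next
          case False
          then have "0 < b2M" using Mp m1 unfolding M_def by simp
          show False
          proof (rule pool_case[OF pos NE2 f2 m1(1) nn1 assms(11) \<open>0 < b2M\<close>])
            show "lam*(b2S+b1S)*Nm < (b2M+b1M)*Nf" using \<open>lam*S*Nm < M*Nf\<close> unfolding S_def M_def by (simp add: add.commute)
          qed
        qed
      next
        case False
        then have sep: "M*Nf \<le> lam*S*Nm" by simp
        define P where "P = R0*(Nm/(R0*M)) powr alpha"
        define Q where "Q = lam*R0*(Nf/(lam*R0*S)) powr alpha"
        have Pp: "0 < P" unfolding P_def using pos Mp by simp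
        have Qp: "0 < Q" unfolding Q_def using pos Sp by simp
        have sepc1: "(b1M+b2M)*Nf \<le> lam*(b1S+b2S)*Nm" using sep unfolding M_def S_def by (simp add: mult.assoc)
        have sepc2: "(b2M+b1M)*Nf \<le> lam*(b2S+b1S)*Nm" using sepc1 by (simp add: add.commute)
        note F1 = sp_facts[OF pos NE1 f1 m2(1) nn2 assms(9), folded M_def S_def, OF Mp Sp sepc1[folded M_def S_def], folded P_def Q_def]
        have M': "b2M + b1M = M" "b2S + b1S = S" unfolding M_def S_def by simp_all
        note F2 = sp_facts[OF pos NE2 f2 m1(1) nn1 assms(11), unfolded M', OF Mp Sp sepc2[unfolded M'], folded P_def Q_def]
        define u where "u = b2S/S"
        define v where "v = b2M/M"
        have uS: "b2S = u*S" "b1S/S = 1 - u" "b2S/S = u" unfolding u_def using Sp by (simp_all add: S_def field_simps)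
        have vM: "b2M = v*M" "b1M/M = 1 - v" "b2M/M = v" unfolding v_def using Mp by (simp_all add: M_def field_simps)
        have u01: "0 < u" "u \<le> 1" using uS Sp s2g assms(11) nn1 unfolding u_def S_def by (auto simp: field_simps)
        have v01: "0 \<le> v" "v \<le> 1" using Mp m1 m2 unfolding v_def M_def by (auto simp: field_simps)
        have ad: "alpha*b2S/S = alpha*u" "alpha*b1S/S = alpha*(1-u)" "alpha*b2M/M = alpha*v" "alpha*b1M/M = alpha*(1-v)"
          using uS(2,3) vM(2,3) by (simp_all add: times_divide_eq_right[symmetric] del: times_divide_eq_right)
        have v0: "0 < v \<longleftrightarrow> 0 < b2M" using Mp unfolding v_def by (simp add: zero_less_divide_iff)
        have v1: "v < 1 \<longleftrightarrow> 0 < b1M" using Mp unfolding v_def M_def by (simp add: field_simps)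
        show False
        proof (cases "M*Nf = lam*S*Nm")
          case True
          have "S*Nm < L*Nf*M"
          proof -
            have "S*Nm*lam = M*Nf" using True by (simp add: algebra_simps)
            moreover have "S*Nm*1 < S*Nm*lam" using pos Sp by simp
            moreover have "M*Nf*1 < M*Nf*L" using pos Mp Lg by simp
            ultimately show ?thesis by (simp add: algebra_simps)
          qed
          then have "P < Q" using PQ_iff2[of Nm Nf lam alpha R0 M S] pos Mp Sp unfolding P_def Q_def L_def by simp
          show False
          proof (rule alg_bound[OF Pp \<open>P < Q\<close> pos(4,5) u01(1)[THEN less_imp_le] u01(2) v01])
            assume "0 < v"
            then show "Q*(1 - alpha*u) \<le> P*(1 - alpha*v)" using F2(1) v0 ad by simp
          next
            assume "v < 1"
            then show "Q*(1 - alpha*(1-u)) \<le> P*(1 - alpha*(1-v))" using F1(1) v1 ad by simp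
          qed
        next
          case False
          then have strict: "M*Nf < lam*S*Nm" using sep by simp
          have st1: "(b1M+b2M)*Nf < lam*(b1S+b2S)*Nm" using strict unfolding M_def S_def by (simp add: mult.assoc)
          have st2: "M*Nf < lam*S*Nm" using strict .
          have full1: "b1M + b1S = B1" using F1(3) st1[folded M_def S_def] by simp
          show False
          proof (rule alg_strict[where cc="b1S = B01", OF Pp Qp pos(4,5) Sp Mp Kp pos(1) u01 v01])
            show "u*S*Nm > K*(v*M)" using h2 uS vM by simp
          next
            assume "S*Nm > K*M"
            then show "P > Q" using PQ_iff[of Nm Nf lam alpha R0 M S] pos Mp Sp unfolding P_def Q_def K_def L_def by (simp add: mult.commute)
          next
            assume "v < 1"
            then show "Q*(1 - alpha*(1-u)) \<le> P*(1 - alpha*(1-v))" using F1(1) v1 ad by simp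
          next
            assume "0 < v"
            then show "Q*(1 - alpha*u) \<le> P*(1 - alpha*v)" using F2(1) v0 ad by simp
          next
            show "Q*(1 - alpha*u) \<ge> P*(1 - alpha*v)" using F2(2)[OF st2 s2g] ad by simp
          next
            assume "\<not> b1S = B01"
            then have "B01 < b1S" using m1 by simp
            then show "Q*(1 - alpha*(1-u)) \<ge> P*(1 - alpha*(1-v))" using F1(2)[OF st1[folded M_def S_def]] ad by simp
          next
            assume c: "b1S = B01"
            have "b1S*(K+Nm) \<le> K*(b1M+b1S)" using BS1 c full1 by simp
            then have "b1S*Nm \<le> K*b1M" by (simp add: algebra_simps)
            moreover have "(1-u)*S = b1S" "(1-v)*M = b1M" using uS vM unfolding S_def M_def by (simp_all add: algebra_simps)
            ultimately show "(1-u)*S*Nm \<le> K*((1-v)*M)" by simp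
          next
            assume "v = 1"
            then have "b1M = 0" using v1 m1 by simp
            then show "\<not> b1S = B01" using full1 B01lt by simp
          qed
        qed
      qed
    qed
  qed
  then show ?thesis using m1 by auto
qed

end
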